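(* Let $f$ be a homeomorphism of a compact metric space $(X,d)$ and let $x\in X$ be a minimally expansive point of $f$ with expansivity constant $\mathfrak{c}>0$. Then for each $y\in B(x,\mathfrak{c})$ and each $0<\epsilon<\mathfrak{c}$ there exists $N\in\mathbb{N}$ such that for every pair $u,v\in\mathcal{O}_f(y)$ satisfying $d(f^n(u),f^n(v))<\mathfrak{c}$ for all $-N\le n\le N$, we have $d(u,v)<\epsilon$.
   Context: $B(x,\epsilon)=\{y: d(x,y)<\epsilon\}$, $\mathcal{O}_f(y)=\{f^n(y):n\in\mathbb{Z}\}$. $f$ is expansive on $A\subset X$ with expansivity constant $\mathfrak{c}$ if for all distinct $a,b\in A$ there is $n\in\mathbb{Z}$ with $d(f^n(a),f^n(b))>\mathfrak{c}$. A point $x$ is a minimally expansive point of $f$ with expansivity constant $\mathfrak{c}>0$ if for each $y\in B(x,\mathfrak{c})$, $f$ is expansive on $\overline{\mathcal{O}_f(y)}$ with expansivity constant $\mathfrak{c}$. *)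

theory Defs
  imports "HOL-Analysis.Analysis"
begin

definition zpow :: "('a \<Rightarrow> 'a) \<Rightarrow> int \<Rightarrow> 'a \<Rightarrow> 'a" where
  "zpow f n = (if 0 \<le> n then f ^^ nat n else inv f ^^ nat (- n))"

definition orbit :: "('a \<Rightarrow> 'a) \<Rightarrow> 'a \<Rightarrow> 'a set" where
  "orbit f y = {zpow f n y | n. True}"

definition expansive_on :: "('a::metric_space \<Rightarrow> 'a) \<Rightarrow> 'a set \<Rightarrow> real \<Rightarrow> bool" where
  "expansive_on f A c \<longleftrightarrow>
     (\<forall>a\<in>A. \<forall>b\<in>A. a \<noteq> b \<longrightarrow> (\<exists>n::int. dist (zpow f n a) (zpow f n b) > c))"

definition minimally_expansive_point :: "('a::metric_space \<Rightarrow> 'a) \<Rightarrow> 'a \<Rightarrow> real \<Rightarrow> bool" where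
  "minimally_expansive_point f x c \<longleftrightarrow> c > 0 \<and>
     (\<forall>y\<in>ball x c. expansive_on f (closure (orbit f y)) c)"

end

theory Submission
  imports Defs
begin

lemma iter_cont: fixes h :: "'a::topological_space \<Rightarrow> 'a" shows "continuous_on UNIV h \<Longrightarrow> continuous_on UNIV (h ^^ k)"
proof (induction k)
  case 0
  have "h ^^ 0 = id" by (rule ext) simp
  thus ?case by (simp only: continuous_on_id')
next
  case (Suc k)
  have "h ^^ Suc k = h \<circ> (h ^^ k)" by simp
  moreover have "continuous_on UNIV (h \<circ> (h ^^ k))"
    using Suc by (metis continuous_on_compose continuous_on_subset subset_UNIV)
  ultimately show ?case by simp
qed

theorem lemma2p6:
  fixes f :: "'a::metric_space \<Rightarrow> 'a" and x :: 'a and c :: real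
  assumes "compact (UNIV :: 'a set)"
    and "homeomorphism UNIV UNIV f g"
    and "minimally_expansive_point f x c"
  shows "\<forall>y\<in>ball x c. \<forall>\<epsilon>. 0 < \<epsilon> \<and> \<epsilon> < c \<longrightarrow>
           (\<exists>N::nat. \<forall>u\<in>orbit f y. \<forall>v\<in>orbit f y.
              (\<forall>n::int. - int N \<le> n \<and> n \<le> int N \<longrightarrow> dist (zpow f n u) (zpow f n v) < c)
              \<longrightarrow> dist u v < \<epsilon>)"
proof (intro ballI allI impI)
  fix y \<epsilon> assume y: "y \<in> ball x c" and e: "0 < \<epsilon> \<and> \<epsilon> < c"
  have exp: "expansive_on f (closure (orbit f y)) c"
    using assms(3) y unfolding minimally_expansive_point_def by auto
  have cf: "continuous_on UNIV f" and cg: "continuous_on UNIV g"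
    using assms(2) unfolding homeomorphism_def by auto
  have "inv f = g"
  proof -
    have gf: "\<And>w. g (f w) = w" and fg: "\<And>w. f (g w) = w"
      using assms(2) unfolding homeomorphism_def by auto
    show "inv f = g"
      by (rule inv_equality) (simp_all add: gf fg)
  qed
  hence cz: "continuous_on UNIV (zpow f n)" for n
    unfolding zpow_def using iter_cont[OF cf] iter_cont[OF cg] by auto
  show "\<exists>N::nat. \<forall>u\<in>orbit f y. \<forall>v\<in>orbit f y.
              (\<forall>n::int. - int N \<le> n \<and> n \<le> int N \<longrightarrow> dist (zpow f n u) (zpow f n v) < c)
              \<longrightarrow> dist u v < \<epsilon>"
  proof (rule ccontr)
    assume "\<not> ?thesis"
    hence "\<forall>N::nat. \<exists>u v. u \<in> orbit f y \<and> v \<in> orbit f y \<and>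
        (\<forall>n::int. - int N \<le> n \<and> n \<le> int N \<longrightarrow> dist (zpow f n u) (zpow f n v) < c) \<and> dist u v \<ge> \<epsilon>"
      by (meson not_less)
    then obtain U V where UV: "\<And>N. U N \<in> orbit f y \<and> V N \<in> orbit f y \<and>
        (\<forall>n::int. - int N \<le> n \<and> n \<le> int N \<longrightarrow> dist (zpow f n (U N)) (zpow f n (V N)) < c) \<and> dist (U N) (V N) \<ge> \<epsilon>"
      by metis
    have "compact (UNIV \<times> UNIV :: ('a \<times> 'a) set)"
      using compact_Times[OF assms(1) assms(1)] .
    hence "seq_compact (UNIV :: ('a \<times> 'a) set)" using compact_imp_seq_compact by auto
    then obtain l r where r: "strict_mono r" and lim0: "((\<lambda>k. (U k, V k)) \<circ> r) \<longlonglongrightarrow> l"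
      by (rule seq_compactE[where f="\<lambda>k. (U k, V k)"]) auto
    have lim: "(\<lambda>k. (U (r k), V (r k))) \<longlonglongrightarrow> l" using lim0 by (simp add: o_def)
    define u v where "u = fst l" and "v = snd l"
    have lu: "(\<lambda>k. U (r k)) \<longlonglongrightarrow> u" using tendsto_fst[OF lim] by (simp add: u_def)
    have lv: "(\<lambda>k. V (r k)) \<longlonglongrightarrow> v" using tendsto_snd[OF lim] by (simp add: v_def)
    have uc: "u \<in> closure (orbit f y)" unfolding closure_sequential using lu UV by (intro exI[of _ "\<lambda>k. U (r k)"]) blast
    have vc: "v \<in> closure (orbit f y)" unfolding closure_sequential using lv UV by (intro exI[of _ "\<lambda>k. V (r k)"]) blast
    have "dist u v \<ge> \<epsilon>"
      using LIMSEQ_le_const[OF tendsto_dist[OF lu lv]] UV by auto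
    hence "u \<noteq> v" using e by auto
    then obtain n where n: "dist (zpow f n u) (zpow f n v) > c"
      using exp uc vc unfolding expansive_on_def by blast
    have l2: "(\<lambda>k. dist (zpow f n (U (r k))) (zpow f n (V (r k)))) \<longlonglongrightarrow> dist (zpow f n u) (zpow f n v)"
      by (intro tendsto_dist continuous_on_tendsto_compose[OF cz lu] continuous_on_tendsto_compose[OF cz lv]) auto
    have "\<forall>k\<ge>nat \<bar>n\<bar>. dist (zpow f n (U (r k))) (zpow f n (V (r k))) \<le> c"
    proof (intro allI impI)
      fix k assume "k \<ge> nat \<bar>n\<bar>"
      hence "r k \<ge> nat \<bar>n\<bar>" using seq_suble[OF r, of k] by linarith
      hence "- int (r k) \<le> n \<and> n \<le> int (r k)" by linarith
      thus "dist (zpow f n (U (r k))) (zpow f n (V (r k))) \<le> c"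
        using UV[of "r k"] by (meson less_imp_le)
    qed
    hence "dist (zpow f n u) (zpow f n v) \<le> c" using LIMSEQ_le_const2[OF l2] by blast
    thus False using n by auto
  qed
qed

end
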